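(* Let $G$ be a directed graph on $n$ vertices, $l\ge 1$ an integer, and $w$ a weight function such that $G_w$ is min-unique for paths of length at most $l$. Then for every pair of vertices $u,v$, $|\mathcal{P}^{2l}_w(u,v)| \le n$. Consequently, the total number of paths in $\bigcup_{u,v}\mathcal{P}^{2l}_w(u,v)$ is at most $n^3$.
   Context: A weight function on a directed graph $G=(V,E)$ is a map $w:E\to\mathbb{N}_{>0}$. $G_w$ denotes $G$ weighted by $w$; the weight $w(P)$ of a path $P$ is the sum of the weights of its edges, and the length $\mathrm{len}(P)$ is its number of edges. For vertices $u,v$ and integer $i\ge 0$, let $\mathcal{P}^i_w(u,v)$ be the set of paths from $u$ to $v$ of length at most $i$ that have minimum weight among all paths from $u$ to $v$ of length at most $i$. $G_w$ is min-unique for paths of length at most $i$ if $|\mathcal{P}^i_w(u,v)|\le 1$ for every pair of vertices $u,v$. *)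

theory Defs
  imports Main
begin

definition is_path :: "'a set \<Rightarrow> ('a \<times> 'a) set \<Rightarrow> 'a list \<Rightarrow> 'a \<Rightarrow> 'a \<Rightarrow> bool" where
  "is_path V E p u v \<longleftrightarrow> p \<noteq> [] \<and> hd p = u \<and> last p = v \<and> distinct p \<and> set p \<subseteq> V
     \<and> (\<forall>e \<in> set (zip p (tl p)). e \<in> E)"

definition path_len :: "'a list \<Rightarrow> nat" where
  "path_len p = length p - 1"

definition path_weight :: "('a \<times> 'a \<Rightarrow> nat) \<Rightarrow> 'a list \<Rightarrow> nat" where
  "path_weight w p = sum_list (map w (zip p (tl p)))"

definition paths_upto :: "'a set \<Rightarrow> ('a \<times> 'a) set \<Rightarrow> nat \<Rightarrow> 'a \<Rightarrow> 'a \<Rightarrow> 'a list set" where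
  "paths_upto V E i u v = {p. is_path V E p u v \<and> path_len p \<le> i}"

definition min_paths :: "'a set \<Rightarrow> ('a \<times> 'a) set \<Rightarrow> ('a \<times> 'a \<Rightarrow> nat) \<Rightarrow> nat \<Rightarrow> 'a \<Rightarrow> 'a \<Rightarrow> 'a list set" where
  "min_paths V E w i u v = {p \<in> paths_upto V E i u v.
      \<forall>q \<in> paths_upto V E i u v. path_weight w p \<le> path_weight w q}"

definition min_unique :: "'a set \<Rightarrow> ('a \<times> 'a) set \<Rightarrow> ('a \<times> 'a \<Rightarrow> nat) \<Rightarrow> nat \<Rightarrow> bool" where
  "min_unique V E w i \<longleftrightarrow> (\<forall>u v. card (min_paths V E w i u v) \<le> 1)"

end

theory Submission
  imports Defs
begin

definition edges :: "'a list \<Rightarrow> ('a \<times> 'a) list" where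
  "edges p = zip p (tl p)"

lemma edges_app: "edges (a @ x # b) = edges (a @ [x]) @ edges (x # b)"
  unfolding edges_def
proof (induction a)
  case Nil then show ?case by simp
next
  case (Cons c a) then show ?case by (cases a) auto
qed

lemma weight_app: "path_weight w (a @ x # b) = path_weight w (a @ [x]) + path_weight w (x # b)"
  using edges_app[of a x b] unfolding path_weight_def edges_def by simp

lemma plen_app: "path_len (a @ x # b) = path_len (a @ [x]) + path_len (x # b)"
  unfolding path_len_def by simp

definition is_walk :: "'a set \<Rightarrow> ('a \<times> 'a) set \<Rightarrow> 'a list \<Rightarrow> 'a \<Rightarrow> 'a \<Rightarrow> bool" where
  "is_walk V E p u v \<longleftrightarrow> p \<noteq> [] \<and> hd p = u \<and> last p = v \<and> set p \<subseteq> V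
     \<and> (\<forall>e \<in> set (edges p). e \<in> E)"

lemma path_walk: "is_path V E p u v \<Longrightarrow> is_walk V E p u v"
  unfolding is_path_def is_walk_def edges_def by auto

lemma walk_app:
  assumes "is_walk V E (a @ [x]) u x" "is_walk V E (x # b) x v"
  shows "is_walk V E (a @ x # b) u v"
  using assms unfolding is_walk_def edges_app[of a x b]
  by (cases a) auto

lemma path_split:
  assumes "is_path V E (a @ x # b) u v"
  shows "is_path V E (a @ [x]) u x \<and> is_path V E (x # b) x v"
  using assms unfolding is_path_def edges_def[symmetric] edges_app[of a x b]
  by (cases a) auto

lemma shortcut:
  "is_walk V E p u v \<Longrightarrow> \<exists>q. is_path V E q u v \<and> length q \<le> length p \<and> path_weight w q \<le> path_weight w p"
proof (induction "length p" arbitrary: p rule: less_induct)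
  case less
  show ?case
  proof (cases "distinct p")
    case True
    then show ?thesis using less.prems unfolding is_walk_def is_path_def edges_def by auto
  next
    case False
    then obtain xs ys zs y where p: "p = xs @ [y] @ ys @ [y] @ zs"
      using not_distinct_decomp by blast
    have pw: "is_walk V E (xs @ y # ys @ y # zs) u v" using less.prems p by simp
    have e1: "edges (xs @ y # ys @ y # zs) = edges (xs @ [y]) @ edges (y # ys @ y # zs)"
      by (rule edges_app)
    have e2: "edges ((xs @ y # ys) @ y # zs) = edges ((xs @ y # ys) @ [y]) @ edges (y # zs)"
      by (rule edges_app)
    have w1: "is_walk V E (xs @ [y]) u y"
      using pw e1 unfolding is_walk_def by (cases xs) auto
    have w2: "is_walk V E (y # zs) y v"
      using pw e2 unfolding is_walk_def by auto
    have "is_walk V E (xs @ y # zs) u v" by (rule walk_app[OF w1 w2])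
    moreover have "length (xs @ y # zs) < length p" using p by simp
    ultimately obtain q where q: "is_path V E q u v" "length q \<le> length (xs @ y # zs)"
      "path_weight w q \<le> path_weight w (xs @ y # zs)"
      using less.hyps by blast
    have "path_weight w p = path_weight w (xs @ [y]) + path_weight w (y # ys @ [y]) + path_weight w (y # zs)"
      unfolding p using weight_app[of w xs y "ys @ y # zs"] weight_app[of w "y # ys" y zs] by simp
    then have "path_weight w (xs @ y # zs) \<le> path_weight w p"
      using weight_app[of w xs y zs] by simp
    then show ?thesis using q \<open>length (xs @ y # zs) < length p\<close> by fastforce
  qed
qed

lemma split_min1:
  assumes P: "a @ x # b \<in> min_paths V E w i u v"
    and j1: "path_len (a @ [x]) \<le> j" and j2: "path_len (x # b) + j \<le> i"
  shows "a @ [x] \<in> min_paths V E w j u x"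
proof -
  have pp: "is_path V E (a @ x # b) u v" "path_len (a @ x # b) \<le> i"
    using P unfolding min_paths_def paths_upto_def by auto
  have s: "is_path V E (a @ [x]) u x" "is_path V E (x # b) x v" using path_split[OF pp(1)] by auto
  show ?thesis
    unfolding min_paths_def paths_upto_def
  proof (safe)
    show "is_path V E (a @ [x]) u x" "path_len (a @ [x]) \<le> j" using s j1 by auto
  next
    fix q assume q: "is_path V E q u x" "path_len q \<le> j"
    show "path_weight w (a @ [x]) \<le> path_weight w q"
    proof (rule ccontr)
      assume lt: "\<not> ?thesis"
      have "q \<noteq> []" "last q = x" using q unfolding is_path_def by auto
      then obtain q' where q': "q = q' @ [x]" by (metis append_butlast_last_id)
      have "is_walk V E (q' @ x # b) u v"
        using walk_app[of V E q' x u b v] path_walk[OF q(1)] path_walk[OF s(2)] q' by simp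
      then obtain r where r: "is_path V E r u v" "length r \<le> length (q' @ x # b)"
        "path_weight w r \<le> path_weight w (q' @ x # b)" using shortcut[where w=w] by blast
      have "path_len r \<le> i" using r(2) plen_app[of q' x b] q' q(2) j2
        unfolding path_len_def by auto
      then have "path_weight w (a @ x # b) \<le> path_weight w r"
        using P r(1) unfolding min_paths_def paths_upto_def by auto
      then show False using r(3) lt q' weight_app[of w q' x b] weight_app[of w a x b] by simp
    qed
  qed
qed

lemma split_min2:
  assumes P: "a @ x # b \<in> min_paths V E w i u v"
    and j1: "path_len (x # b) \<le> j" and j2: "path_len (a @ [x]) + j \<le> i"
  shows "x # b \<in> min_paths V E w j x v"
proof -
  have pp: "is_path V E (a @ x # b) u v" "path_len (a @ x # b) \<le> i"
    using P unfolding min_paths_def paths_upto_def by auto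
  have s: "is_path V E (a @ [x]) u x" "is_path V E (x # b) x v" using path_split[OF pp(1)] by auto
  show ?thesis
    unfolding min_paths_def paths_upto_def
  proof (safe)
    show "is_path V E (x # b) x v" "path_len (x # b) \<le> j" using s j1 by auto
  next
    fix q assume q: "is_path V E q x v" "path_len q \<le> j"
    show "path_weight w (x # b) \<le> path_weight w q"
    proof (rule ccontr)
      assume lt: "\<not> ?thesis"
      have "q \<noteq> []" "hd q = x" using q unfolding is_path_def by auto
      then obtain q' where q': "q = x # q'" by (metis list.collapse)
      have "is_walk V E (a @ x # q') u v"
        using walk_app[of V E a x u q' v] path_walk[OF q(1)] path_walk[OF s(1)] q' by simp
      then obtain r where r: "is_path V E r u v" "length r \<le> length (a @ x # q')"
        "path_weight w r \<le> path_weight w (a @ x # q')" using shortcut[where w=w] by blast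
      have "path_len r \<le> i" using r(2) plen_app[of a x q'] q' q(2) j2
        unfolding path_len_def by auto
      then have "path_weight w (a @ x # b) \<le> path_weight w r"
        using P r(1) unfolding min_paths_def paths_upto_def by auto
      then show False using r(3) lt q' weight_app[of w a x q'] weight_app[of w a x b] by simp
    qed
  qed
qed

lemma min_paths_finite:
  assumes "finite V" shows "finite (min_paths V E w i u v)"
proof -
  have "min_paths V E w i u v \<subseteq> {xs. set xs \<subseteq> V \<and> length xs \<le> card V}"
    unfolding min_paths_def paths_upto_def is_path_def
    using assms by (auto simp: card_mono distinct_card[symmetric])
  then show ?thesis using finite_lists_length_le[OF assms] finite_subset by blast
qed

theorem lemma5:
  fixes V :: "'a set" and E :: "('a \<times> 'a) set" and w :: "'a \<times> 'a \<Rightarrow> nat"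
    and n l :: nat
  assumes "finite V" and "E \<subseteq> V \<times> V" and "card V = n"
    and "l \<ge> 1"
    and "\<forall>e \<in> E. w e > 0"
    and "min_unique V E w l"
  shows "(\<forall>u v. card (min_paths V E w (2 * l) u v) \<le> n)
    \<and> card (\<Union>u\<in>V. \<Union>v\<in>V. min_paths V E w (2 * l) u v) \<le> n ^ 3"
proof -
  have one: "card (min_paths V E w (2 * l) u v) \<le> n" for u v
  proof -
    let ?M = "min_paths V E w (2 * l) u v"
    define f where "f P = P ! min l (length P - 1)" for P :: "'a list"
    have dec: "P = take (min l (length P - 1)) P @ f P # drop (Suc (min l (length P - 1))) P
          \<and> take (min l (length P - 1)) P @ [f P] \<in> min_paths V E w l u (f P)
          \<and> f P # drop (Suc (min l (length P - 1))) P \<in> min_paths V E w l (f P) v"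
      if PM: "P \<in> ?M" for P
    proof -
      let ?k = "min l (length P - 1)"
      have ne: "P \<noteq> []" "path_len P \<le> 2 * l"
        using PM unfolding min_paths_def paths_upto_def is_path_def by auto
      have kl: "?k < length P" using ne(1) by (cases P) auto
      have Pe: "P = take ?k P @ f P # drop (Suc ?k) P"
        unfolding f_def using id_take_nth_drop[OF kl] .
      have L1: "path_len (take ?k P @ [f P]) = ?k" using kl unfolding path_len_def by simp
      have L2: "path_len (f P # drop (Suc ?k) P) = length P - 1 - ?k" using kl unfolding path_len_def by simp
      have PM': "take ?k P @ f P # drop (Suc ?k) P \<in> ?M" using PM Pe by simp
      have A: "take ?k P @ [f P] \<in> min_paths V E w l u (f P)"
        by (rule split_min1[OF PM']) (use L1 L2 ne in \<open>auto simp: path_len_def\<close>)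
      have B: "f P # drop (Suc ?k) P \<in> min_paths V E w l (f P) v"
        by (rule split_min2[OF PM']) (use L1 L2 ne in \<open>auto simp: path_len_def\<close>)
      show ?thesis using Pe A B by simp
    qed
    have uniq: "p = q" if "p \<in> min_paths V E w l x y" "q \<in> min_paths V E w l x y" for p q x y
    proof -
      have "card (min_paths V E w l x y) \<le> 1" using assms(6) unfolding min_unique_def by blast
      moreover have "finite (min_paths V E w l x y)" by (rule min_paths_finite[OF assms(1)])
      ultimately show ?thesis using that card_le_Suc0_iff_eq by (metis One_nat_def)
    qed
    have "inj_on f ?M"
    proof (rule inj_onI)
      fix P Q assume P: "P \<in> ?M" and Q: "Q \<in> ?M" and fe: "f P = f Q"
      note dP = dec[OF P] and dQ = dec[OF Q]
      have 1: "take (min l (length P - 1)) P @ [f P] = take (min l (length Q - 1)) Q @ [f P]"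
        using uniq dP dQ fe by metis
      have 2: "f P # drop (Suc (min l (length P - 1))) P = f P # drop (Suc (min l (length Q - 1))) Q"
        using uniq dP dQ fe by metis
      have t: "take (min l (length P - 1)) P = take (min l (length Q - 1)) Q"
        using 1 by simp
      have d: "drop (Suc (min l (length P - 1))) P = drop (Suc (min l (length Q - 1))) Q"
        using 2 by simp
      have "P = take (min l (length P - 1)) P @ f P # drop (Suc (min l (length P - 1))) P"
        using dP by blast
      also have "\<dots> = take (min l (length Q - 1)) Q @ f Q # drop (Suc (min l (length Q - 1))) Q"
        using t d fe by simp
      also have "\<dots> = Q" using dQ by simp
      finally show "P = Q" .
    qed
    moreover have "f ` ?M \<subseteq> V"
    proof
      fix x assume "x \<in> f ` ?M"
      then obtain P where P: "P \<in> ?M" "x = f P" by auto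
      have "set P \<subseteq> V" "P \<noteq> []" using P unfolding min_paths_def paths_upto_def is_path_def by auto
      moreover have "min l (length P - 1) < length P" using \<open>P \<noteq> []\<close> by (cases P) auto
      ultimately show "x \<in> V" using P(2) unfolding f_def using nth_mem by blast
    qed
    ultimately show ?thesis using card_inj_on_le assms(1,3) by blast
  qed
  have "card (\<Union>u\<in>V. \<Union>v\<in>V. min_paths V E w (2 * l) u v)
      \<le> (\<Sum>u\<in>V. card (\<Union>v\<in>V. min_paths V E w (2 * l) u v))" by (rule card_UN_le[OF assms(1)])
  also have "\<dots> \<le> (\<Sum>u\<in>V. \<Sum>v\<in>V. card (min_paths V E w (2 * l) u v))"
    by (rule sum_mono, rule card_UN_le[OF assms(1)])
  also have "\<dots> \<le> (\<Sum>u\<in>V. \<Sum>v\<in>V. n)" by (intro sum_mono one)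
  also have "\<dots> = n ^ 3" using assms(3) by (simp add: power3_eq_cube)
  finally show ?thesis using one by blast
qed

end
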